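(* Let $Y_1,Y_2,\ldots$ be i.i.d. Bernoulli$(1/2)$ and let $(Z^k)_k$ be generated by the bit-drop scheme described in the context, independently of $(Y_i)$; let $L^a(k)=L^a_n(k)$ be the length of a longest common subsequence of $Z^k$ and $Y_1\ldots Y_n$. Let $\gamma>0$, let $k$ satisfy $0.45n\le k<n$, let $\sigma_k:=\sigma(Z^k_i,Y_j: i\le k,\ j\le n)$, and let $E^n_{2k}$ be the event that every $(\pi,\eta)\in M^k$ has more than $\gamma n$ non-empty matches. Then on the event $E^n_{2k}$, $$P\big(L^a(k+1)-L^a(k)=1\,\big|\,\sigma_k\big)\geq 0.5\gamma.$$
   Context: Bit-drop scheme: let $V_1,V_2,\ldots$ be i.i.d. Bernoulli$(1/2)$ and let $T_3,T_4,\ldots$ be independent, independent of $(V_k)$, with $T_{k+1}$ uniform on $\{2,\ldots,k\}$. Set $Z^2:=V_1V_2$ and, given $Z^k=Z^k_1\ldots Z^k_k$, define $Z^{k+1}_j:=Z^k_j$ for $j<T_{k+1}$, $Z^{k+1}_{T_{k+1}}:=V_{k+1}$, $Z^{k+1}_j:=Z^k_{j-1}$ for $T_{k+1}<j\le k+1$. A pair of matching subsequences of $Z^k$ and $Y_1\ldots Y_n$ of length $m$ is a pair $(\pi,\eta)$ of strictly increasing maps $\pi:\{1,\ldots,m\}\to\{1,\ldots,k\}$, $\eta:\{1,\ldots,m\}\to\{1,\ldots,n\}$ with $Z^k_{\pi(i)}=Y_{\eta(i)}$ for all $i$. $M^k_2$ is the set of such pairs of maximal length; pairs are ordered componentwise,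 and $M^k$ is the set of minimal elements of $M^k_2$. For $1\le i\le m-1$, $(\pi(i),\pi(i+1),\eta(i),\eta(i+1))$ is a match of $(\pi,\eta)$; it is non-empty if $\eta(i)+2\le\eta(i+1)$. *)

theory Defs
  imports "HOL-Probability.Probability"
begin

text \<open>Bit-drop scheme. Strings are lists; positions are 1-based as in the paper.
  bitdrop v t k is Z^k built from V_1..V_k and T_3..T_k
  (Z^1 = V_1 and Z^0 = [] are auxiliary, only k >= 2 is meaningful).\<close>
primrec bitdrop :: "(nat \<Rightarrow> 'b) \<Rightarrow> (nat \<Rightarrow> nat) \<Rightarrow> nat \<Rightarrow> 'b list" where
  "bitdrop v t 0 = []"
| "bitdrop v t (Suc k) =
     (if k < 2 then bitdrop v t k @ [v (Suc k)]
      else take (t (Suc k) - 1) (bitdrop v t k) @ [v (Suc k)] @ drop (t (Suc k) - 1) (bitdrop v t k))"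

text \<open>A pair of matching subsequences (pi, eta) of zs and ys, with pi, eta given as the lists
  of their values pi(1),...,pi(m) and eta(1),...,eta(m) (1-based positions).\<close>
definition matching :: "'b list \<Rightarrow> 'b list \<Rightarrow> nat list \<times> nat list \<Rightarrow> bool" where
  "matching zs ys pe \<longleftrightarrow>
     (let p = fst pe; q = snd pe in
       length p = length q \<and> sorted_wrt (<) p \<and> sorted_wrt (<) q \<and>
       set p \<subseteq> {1..length zs} \<and> set q \<subseteq> {1..length ys} \<and>
       (\<forall>i < length p. zs ! (p ! i - 1) = ys ! (q ! i - 1)))"

definition lcs_len :: "'b list \<Rightarrow> 'b list \<Rightarrow> nat" where
  "lcs_len zs ys = Max {length (fst pe) | pe. matching zs ys pe}"

definition M2 :: "'b list \<Rightarrow> 'b list \<Rightarrow> (nat list \<times> nat list) set" where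
  "M2 zs ys = {pe. matching zs ys pe \<and> length (fst pe) = lcs_len zs ys}"

definition pair_le :: "nat list \<times> nat list \<Rightarrow> nat list \<times> nat list \<Rightarrow> bool" where
  "pair_le a b \<longleftrightarrow> list_all2 (\<le>) (fst a) (fst b) \<and> list_all2 (\<le>) (snd a) (snd b)"

definition Mmin :: "'b list \<Rightarrow> 'b list \<Rightarrow> (nat list \<times> nat list) set" where
  "Mmin zs ys = {a \<in> M2 zs ys. \<not> (\<exists>b \<in> M2 zs ys. pair_le b a \<and> b \<noteq> a)}"

definition nonempty_matches :: "nat list \<times> nat list \<Rightarrow> nat" where
  "nonempty_matches pe = card {i. Suc i < length (snd pe) \<and> snd pe ! i + 2 \<le> snd pe ! Suc i}"

end

theory Submission
  imports Defs
begin

lemma condexp_indep: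
  fixes X :: "'a \<Rightarrow> 'x::countable" and W :: "'a \<Rightarrow> 'x"
    and G :: "'x \<Rightarrow> 'x \<Rightarrow> real"
  assumes P: "prob_space M"
   and ind: "prob_space.indep_var M (count_space UNIV) X (count_space UNIV) W"
   and G: "\<And>a w. 0 \<le> G a w \<and> G a w \<le> 1"
   and f: "\<And>x. x \<in> space M \<Longrightarrow> f x = G (X x) (W x)"
  shows "AE x in M. real_cond_exp M (vimage_algebra (space M) X (count_space UNIV)) f x
            = (\<integral>w. G (X x) w \<partial>distr M (count_space UNIV) W)"
proof -
  interpret prob_space M by (rule P)
  have Xm[measurable]: "X \<in> measurable M (count_space UNIV)" using indep_var_rv1[OF ind] .
  have Wm[measurable]: "W \<in> measurable M (count_space UNIV)" using indep_var_rv2[OF ind] .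
  define F where "F = vimage_algebra (space M) X (count_space UNIV)"
  have sub: "subalgebra M F"
    unfolding subalgebra_def F_def
    using sets_image_in_sets[OF refl Xm] by auto
  interpret finite_measure_subalgebra M F
    by (unfold_locales) (rule sub)
  define PW where "PW = distr M (count_space UNIV) W"
  define PX where "PX = distr M (count_space UNIV) X"
  interpret PW: prob_space PW unfolding PW_def by (rule prob_space_distr) simp
  interpret PX: prob_space PX unfolding PX_def by (rule prob_space_distr) simp
  interpret PXW: pair_prob_space PX PW ..
  define h where "h a = (\<integral>w. G a w \<partial>PW)" for a
  have Gint: "integrable PW (G a)" for a
    by (rule PW.integrable_const_bound[where B=1]) (auto simp: PW_def G abs_le_iff dest: spec)
  have h01: "0 \<le> h a \<and> h a \<le> 1" for a
  proof
    show "0 \<le> h a" unfolding h_def using G by (simp add: Bochner_Integration.integral_nonneg)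
    have "h a \<le> (\<integral>w. 1 \<partial>PW)" unfolding h_def
      by (rule integral_mono[OF Gint]) (auto simp: G)
    then show "h a \<le> 1" by (simp add: PW.prob_space)
  qed
  have fm: "f \<in> borel_measurable M"
    by (rule measurable_cong[THEN iffD2, of _ _ "\<lambda>x. G (X x) (W x)"]) (auto simp: f)
  have "AE x in M. real_cond_exp M F f x = h (X x)"
  proof (rule real_cond_exp_charact)
    show "integrable M f"
      by (rule integrable_const_bound[where B=1]) (auto simp: f fm G abs_le_iff dest: spec)
    show "integrable M (\<lambda>x. h (X x))"
      by (rule integrable_const_bound[where B=1]) (auto simp: h01 abs_le_iff dest: spec)
    show "(\<lambda>x. h (X x)) \<in> borel_measurable F"
      unfolding F_def by (rule measurable_compose[OF measurable_vimage_algebra1]) auto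
    fix A assume "A \<in> sets F"
    then obtain B where A: "A = X -` B \<inter> space M"
      unfolding F_def by (subst (asm) sets_vimage_algebra2) auto
    have cs: "count_space UNIV \<Otimes>\<^sub>M count_space UNIV = count_space (UNIV :: ('x \<times> 'x) set)"
      by (simp add: pair_measure_countable)
    have dist: "PX \<Otimes>\<^sub>M PW = distr M (count_space UNIV) (\<lambda>x. (X x, W x))"
      using ind unfolding indep_var_distribution_eq PX_def PW_def cs by simp
    have fin: "finite_measure (PX \<Otimes>\<^sub>M PW)" unfolding dist
      by (intro prob_space.finite_measure prob_space_distr) simp
    have intXW: "integrable (PX \<Otimes>\<^sub>M PW) (\<lambda>z. indicator B (fst z) * G (fst z) (snd z))"
      by (rule finite_measure.integrable_const_bound[OF fin, where B=1]) (auto simp: dist G abs_le_iff indicator_def)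
    have "(\<integral>x\<in>A. f x \<partial>M) = (\<integral>x. indicator B (X x) * G (X x) (W x) \<partial>M)"
      unfolding set_lebesgue_integral_def A
      by (rule Bochner_Integration.integral_cong) (auto simp: f indicator_def)
    also have "\<dots> = (\<integral>z. indicator B (fst z) * G (fst z) (snd z) \<partial>distr M (count_space UNIV) (\<lambda>x. (X x, W x)))"
      by (subst integral_distr) auto
    also have "\<dots> = (\<integral>z. indicator B (fst z) * G (fst z) (snd z) \<partial>(PX \<Otimes>\<^sub>M PW))"
      by (simp add: dist)
    also have "\<dots> = (\<integral>a. (\<integral>w. indicator B a * G a w \<partial>PW) \<partial>PX)"
      using PXW.integral_fst'[OF intXW] by simp
    also have "\<dots> = (\<integral>a. indicator B a * h a \<partial>PX)"
      unfolding h_def by simp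
    also have "\<dots> = (\<integral>x. indicator B (X x) * h (X x) \<partial>M)"
      unfolding PX_def by (subst integral_distr) auto
    also have "\<dots> = (\<integral>x\<in>A. h (X x) \<partial>M)"
      unfolding set_lebesgue_integral_def A
      by (rule Bochner_Integration.integral_cong) (auto simp: indicator_def)
    finally show "(\<integral>x\<in>A. f x \<partial>M) = (\<integral>x\<in>A. h (X x) \<partial>M)" .
  qed
  then show ?thesis unfolding F_def h_def PW_def .
qed

lemma expect_indep2:
  fixes V' T' :: "'a \<Rightarrow> 'x::countable" and g :: "'x \<Rightarrow> 'x \<Rightarrow> real"
  assumes P: "prob_space M" and ind: "prob_space.indep_var M (count_space UNIV) V' (count_space UNIV) T'"
    and g: "\<And>a b. 0 \<le> g a b \<and> g a b \<le> 1"
  shows "(\<integral>x. g (V' x) (T' x) \<partial>M)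
     = (\<integral>v. (\<integral>t. g v t \<partial>distr M (count_space UNIV) T') \<partial>distr M (count_space UNIV) V')"
proof -
  interpret prob_space M by (rule P)
  have Vm[measurable]: "V' \<in> measurable M (count_space UNIV)" using indep_var_rv1[OF ind] .
  have Tm[measurable]: "T' \<in> measurable M (count_space UNIV)" using indep_var_rv2[OF ind] .
  define PV where "PV = distr M (count_space UNIV) V'"
  define PT where "PT = distr M (count_space UNIV) T'"
  interpret PV: prob_space PV unfolding PV_def by (rule prob_space_distr) simp
  interpret PT: prob_space PT unfolding PT_def by (rule prob_space_distr) simp
  interpret PVT: pair_prob_space PV PT ..
  have cs: "count_space UNIV \<Otimes>\<^sub>M count_space UNIV = count_space (UNIV :: ('x \<times> 'x) set)"
    by (simp add: pair_measure_countable)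
  have dist: "PV \<Otimes>\<^sub>M PT = distr M (count_space UNIV) (\<lambda>x. (V' x, T' x))"
    using ind unfolding indep_var_distribution_eq PV_def PT_def cs by simp
  have fin: "finite_measure (PV \<Otimes>\<^sub>M PT)" unfolding dist
    by (intro prob_space.finite_measure prob_space_distr) simp
  have int: "integrable (PV \<Otimes>\<^sub>M PT) (\<lambda>z. g (fst z) (snd z))"
    by (rule finite_measure.integrable_const_bound[OF fin, where B=1]) (auto simp: dist g abs_le_iff dest: spec)
  have "(\<integral>x. g (V' x) (T' x) \<partial>M) = (\<integral>z. g (fst z) (snd z) \<partial>distr M (count_space UNIV) (\<lambda>x. (V' x, T' x)))"
    by (subst integral_distr) auto
  also have "\<dots> = (\<integral>z. g (fst z) (snd z) \<partial>(PV \<Otimes>\<^sub>M PT))" by (simp add: dist)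
  also have "\<dots> = (\<integral>v. (\<integral>t. g v t \<partial>PT) \<partial>PV)"
    using PVT.integral_fst'[OF int] by simp
  finally show ?thesis unfolding PV_def PT_def .
qed

lemma measurable_map_comp:
  assumes "set L \<subseteq> A"
  shows "(\<lambda>g. map g L) \<in> measurable (PiM A (\<lambda>_. count_space (UNIV::'c::countable set))) (count_space UNIV)"
  using assms
proof (induction L)
  case Nil then show ?case by simp
next
  case (Cons i L)
  have cs: "count_space UNIV \<Otimes>\<^sub>M count_space UNIV = count_space (UNIV :: ('c \<times> 'c list) set)"
    by (simp add: pair_measure_countable)
  have "(\<lambda>g. (g i, map g L)) \<in> measurable (PiM A (\<lambda>_. count_space (UNIV::'c set))) (count_space UNIV \<Otimes>\<^sub>M count_space UNIV)"
    using Cons by (intro measurable_Pair measurable_component_singleton) auto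
  then have "(\<lambda>g. (g i, map g L)) \<in> measurable (PiM A (\<lambda>_. count_space (UNIV::'c set))) (count_space UNIV)"
    unfolding cs .
  then have "(\<lambda>z. fst z # snd z) \<circ> (\<lambda>g. (g i, map g L)) \<in> measurable (PiM A (\<lambda>_. count_space (UNIV::'c set))) (count_space UNIV)"
    by (rule measurable_comp) simp
  then show ?case by (simp add: comp_def)
qed

lemma measurable_dep:
  assumes "finite J" "J \<subseteq> A" and dep: "\<And>g g'. (\<And>i. i \<in> J \<Longrightarrow> g i = g' i) \<Longrightarrow> F g = F g'"
  shows "F \<in> measurable (PiM A (\<lambda>_. count_space (UNIV::'c::countable set))) (count_space UNIV)"
proof -
  obtain L where L: "set L = J" using finite_list[OF assms(1)] by blast
  define H where "H xs = F (\<lambda>i. the (map_of (zip L xs) i))" for xs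
  have "F = (\<lambda>g. H (map g L))"
  proof
    fix g
    show "F g = H (map g L)" unfolding H_def
      by (rule dep) (simp add: map_of_zip_map L)
  qed
  moreover have "(\<lambda>g. H (map g L)) \<in> measurable (PiM A (\<lambda>_. count_space (UNIV::'c set))) (count_space UNIV)"
    using measurable_comp[OF measurable_map_comp[of L A], of H "count_space UNIV"] L assms(2)
    by (simp add: comp_def)
  ultimately show ?thesis by simp
qed


lemma sorted_take_le:
  assumes "sorted_wrt (<) (p::nat list)" "i < length p" "x \<in> set (take (Suc i) p)"
  shows "x \<le> p ! i"
proof -
  from assms(3) obtain j where j: "j < length (take (Suc i) p)" "x = take (Suc i) p ! j"
    by (auto simp: in_set_conv_nth)
  then have "j \<le> i" "x = p ! j" by auto
  then show ?thesis using assms(1,2) sorted_wrt_nth_less[OF assms(1), of j i]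
    by (cases "j = i") auto
qed

lemma sorted_drop_ge:
  assumes "sorted_wrt (<) (p::nat list)" "x \<in> set (drop j p)"
  shows "p ! j \<le> x"
proof -
  from assms(2) obtain l where l: "l < length (drop j p)" "x = drop j p ! l"
    by (auto simp: in_set_conv_nth)
  then have "x = p ! (j + l)" "j + l < length p" by auto
  then show ?thesis using sorted_wrt_nth_less[OF assms(1), of j "j+l"]
    by (cases "l = 0") auto
qed

lemma length_bitdrop: "length (bitdrop v t k) = k"
  by (induction k) auto

lemma bitdrop_cong:
  "(\<And>i. 1 \<le> i \<Longrightarrow> i \<le> k \<Longrightarrow> v i = v' i) \<Longrightarrow> (\<And>i. 3 \<le> i \<Longrightarrow> i \<le> k \<Longrightarrow> t i = t' i)
   \<Longrightarrow> bitdrop v t k = bitdrop v' t' k"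
proof (induction k)
  case 0 then show ?case by simp
next
  case (Suc k)
  have "bitdrop v t k = bitdrop v' t' k" using Suc by auto
  moreover have "v (Suc k) = v' (Suc k)" using Suc by auto
  moreover have "k \<ge> 2 \<Longrightarrow> t (Suc k) = t' (Suc k)" using Suc by auto
  ultimately show ?case by auto
qed

lemma matching_length_le:
  assumes "matching zs ys pe" shows "length (fst pe) \<le> length zs"
proof -
  have d: "distinct (fst pe)" using assms by (auto simp: matching_def Let_def strict_sorted_iff)
  have "length (fst pe) = card (set (fst pe))" using distinct_card[OF d] by simp
  also have "\<dots> \<le> card {1..length zs}" using assms by (intro card_mono) (auto simp: matching_def Let_def)
  finally show ?thesis by simp
qed

lemma lcs_finite: "finite {length (fst pe) | pe. matching zs ys pe}"
  by (rule finite_subset[of _ "{0..length zs}"]) (auto dest: matching_length_le)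

lemma matching_nil: "matching zs ys ([],[])"
  by (simp add: matching_def)

lemma lcs_ge: "matching zs ys pe \<Longrightarrow> length (fst pe) \<le> lcs_len zs ys"
  unfolding lcs_len_def by (rule Max_ge[OF lcs_finite]) (metis (mono_tags, lifting) mem_Collect_eq prod.collapse)

lemma lcs_ex: "\<exists>pe. matching zs ys pe \<and> length (fst pe) = lcs_len zs ys"
proof -
  have "lcs_len zs ys \<in> {length (fst pe) | pe. matching zs ys pe}"
    unfolding lcs_len_def by (rule Max_in[OF lcs_finite]) (use matching_nil in auto)
  then show ?thesis by auto
qed

lemma ins_matching:
  assumes m: "matching z ys (p,q)" and i: "Suc i < length q" and g: "q!i + 2 \<le> q!Suc i"
  shows "matching (take (p!i) z @ [ys!(q!i)] @ drop (p!i) z) ys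
           (take (Suc i) p @ [Suc (p!i)] @ map Suc (drop (Suc i) p),
            take (Suc i) q @ [Suc (q!i)] @ drop (Suc i) q)"
proof -
  have len: "length p = length q" and sp: "sorted_wrt (<) p" and sq: "sorted_wrt (<) q"
    and setp: "set p \<subseteq> {1..length z}" and setq: "set q \<subseteq> {1..length ys}"
    and val: "\<And>j. j < length p \<Longrightarrow> z ! (p ! j - 1) = ys ! (q ! j - 1)"
    using m by (auto simp: matching_def Let_def)
  have pi: "p!i \<in> set p" "p!Suc i \<in> set p" using i len by auto
  have qi: "q!i \<in> set q" "q!Suc i \<in> set q" using i len by auto
  have pii: "p!i < p!Suc i" using sorted_wrt_nth_less[OF sp, of i "Suc i"] i len by auto
  have p1: "1 \<le> p!i" "p!Suc i \<le> length z" using pi setp by auto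
  have q1: "q!Suc i \<le> length ys" using qi setq by auto
  define v where "v = ys!(q!i)"
  define z' where "z' = take (p!i) z @ [v] @ drop (p!i) z"
  define p' where "p' = take (Suc i) p @ [Suc (p!i)] @ map Suc (drop (Suc i) p)"
  define q' where "q' = take (Suc i) q @ [Suc (q!i)] @ drop (Suc i) q"
  have lz': "length z' = Suc (length z)" using p1 pii unfolding z'_def by auto
  have lp': "length p' = Suc (length p)" using i len unfolding p'_def by auto
  have lq': "length q' = Suc (length q)" using i len unfolding q'_def by auto
  have tp: "x \<le> p!i" if "x \<in> set (take (Suc i) p)" for x
    using sorted_take_le[OF sp _ that] i len by auto
  have tq: "x \<le> q!i" if "x \<in> set (take (Suc i) q)" for x
    using sorted_take_le[OF sq _ that] i len by auto
  have dp: "p!Suc i \<le> x" if "x \<in> set (drop (Suc i) p)" for x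
    using sorted_drop_ge[OF sp that] .
  have dq: "q!Suc i \<le> x" if "x \<in> set (drop (Suc i) q)" for x
    using sorted_drop_ge[OF sq that] .
  have "sorted_wrt (<) p'"
    unfolding p'_def sorted_wrt_append
    using sorted_wrt_take[OF sp] sorted_wrt_drop[OF sp] tp dp pii
    by (fastforce simp: sorted_wrt_map)
  moreover have "sorted_wrt (<) q'"
    unfolding q'_def sorted_wrt_append
    using sorted_wrt_take[OF sq] sorted_wrt_drop[OF sq] tq dq g
    by fastforce
  moreover have "set p' \<subseteq> {1..length z'}"
    unfolding p'_def lz' using setp p1 pii set_take_subset[of "Suc i" p] set_drop_subset[of "Suc i" p]
    by fastforce
  moreover have "set q' \<subseteq> {1..length ys}"
    unfolding q'_def using setq q1 g set_take_subset[of "Suc i" q] set_drop_subset[of "Suc i" q]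
    by fastforce
  moreover have "z' ! (p' ! j - 1) = ys ! (q' ! j - 1)" if j: "j < length p'" for j
  proof -
    consider "j < Suc i" | "j = Suc i" | "Suc i < j" by linarith
    then show ?thesis
    proof cases
      case 1
      then have e: "p'!j = p!j" "q'!j = q!j" using i len unfolding p'_def q'_def
        by (auto simp: nth_append)
      have "p!j \<le> p!i" using sorted_wrt_nth_less[OF sp, of j i] 1 i len by (cases "j = i") auto
      moreover have "p!j \<in> set p" using 1 i len by auto
      then have "p!j \<ge> 1" using setp by auto
      ultimately have "z'!(p!j - 1) = z!(p!j-1)" unfolding z'_def using p1 pii
        by (auto simp: nth_append)
      then show ?thesis using e val[of j] 1 i len by auto
    next
      case 2
      then have e: "p'!j = Suc (p!i)" "q'!j = Suc (q!i)" using i len unfolding p'_def q'_def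
        by (auto simp: nth_append)
      have "z'!(p!i) = v" unfolding z'_def using p1 pii by (auto simp: nth_append)
      then show ?thesis using e v_def by simp
    next
      case 3
      then obtain l where l: "j = Suc (Suc i) + l" by (metis Suc_leI le_iff_add)
      then have jl: "Suc i + l < length p" using j lp' by simp
      then have e: "p'!j = Suc (p!(Suc i + l))" "q'!j = q!(Suc i + l)" using i len l unfolding p'_def q'_def
        by (auto simp: nth_append)
      have "p!Suc i \<le> p!(Suc i + l)" using sorted_wrt_nth_less[OF sp, of "Suc i" "Suc i + l"] jl
        by (cases "l = 0") auto
      then have "z'!(p!(Suc i + l)) = z!(p!(Suc i + l) - 1)" unfolding z'_def using p1 pii
        by (auto simp: nth_append)
      then show ?thesis using e val[OF jl] by simp
    qed
  qed
  ultimately show ?thesis unfolding matching_def Let_def using lp' lq' len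
    by (auto simp: z'_def p'_def q'_def v_def)
qed

lemma length_filter_eq_le1:
  assumes "distinct (xs::nat list)" shows "length (filter (\<lambda>a. a = c) xs) \<le> 1"
proof -
  have d: "distinct (filter (\<lambda>a. a = c) xs)" using assms by simp
  have "length (filter (\<lambda>a. a = c) xs) = card (set (filter (\<lambda>a. a = c) xs))"
    using distinct_card[OF d] by simp
  also have "\<dots> \<le> card {c}" by (intro card_mono) auto
  finally show ?thesis by simp
qed

lemma sorted_map_shift:
  "sorted_wrt (\<lambda>x y. fst x < fst y) xs \<Longrightarrow> \<forall>x\<in>set xs. fst x \<noteq> (c::nat) \<Longrightarrow>
   sorted_wrt (<) (map (\<lambda>x. if fst x > c then fst x - 1 else fst x) xs)"
  by (induction xs) (auto simp: sorted_wrt_map)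

lemma del_matching:
  assumes m: "matching (take s z @ [v] @ drop s z) ys (p,q)" and s: "s \<le> length z"
  shows "\<exists>pe. matching z ys pe \<and> length p \<le> length (fst pe) + 1"
proof -
  define z' where "z' = take s z @ [v] @ drop s z"
  have lz': "length z' = Suc (length z)" using s unfolding z'_def by auto
  have len: "length p = length q" and sp: "sorted_wrt (<) p" and sq: "sorted_wrt (<) q"
    and setp: "set p \<subseteq> {1..length z'}" and setq: "set q \<subseteq> {1..length ys}"
    and val: "\<And>j. j < length p \<Longrightarrow> z' ! (p ! j - 1) = ys ! (q ! j - 1)"
    using m by (auto simp: matching_def Let_def z'_def)
  define ps where "ps = zip p q"
  have mf: "map fst ps = p" and ms: "map snd ps = q" using len unfolding ps_def by auto
  have sps1: "sorted_wrt (\<lambda>x y. fst x < fst y) ps" using sp mf by (metis sorted_wrt_map)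
  have sps2: "sorted_wrt (\<lambda>x y. snd x < snd y) ps" using sq ms by (metis sorted_wrt_map)
  have valps: "z' ! (a - 1) = ys ! (b - 1) \<and> a \<in> set p \<and> b \<in> set q" if "(a,b) \<in> set ps" for a b
  proof -
    from that obtain j where "j < length p" "a = p!j" "b = q!j" unfolding ps_def
      using len by (auto simp: in_set_zip)
    then show ?thesis using val len by (metis nth_mem)
  qed
  define f where "f a = (if a > Suc s then a - 1 else a)" for a
  define ps2 where "ps2 = filter (\<lambda>x. fst x \<noteq> Suc s) ps"
  define p'' where "p'' = map (\<lambda>x. f (fst x)) ps2"
  define q'' where "q'' = map snd ps2"
  have in2: "x \<in> set ps \<and> fst x \<noteq> Suc s" if "x \<in> set ps2" for x using that unfolding ps2_def by auto
  have "sorted_wrt (<) p''"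
  proof -
    have "sorted_wrt (\<lambda>x y. fst x < fst y) ps2" unfolding ps2_def by (rule sorted_wrt_filter[OF sps1])
    moreover have "\<forall>x\<in>set ps2. fst x \<noteq> Suc s" using in2 by blast
    ultimately show ?thesis unfolding p''_def f_def by (rule sorted_map_shift)
  qed
  moreover have "sorted_wrt (<) q''"
    unfolding q''_def sorted_wrt_map ps2_def
    by (rule sorted_wrt_filter, rule sps2)
  moreover have "set p'' \<subseteq> {1..length z}"
  proof
    fix y assume "y \<in> set p''"
    then obtain a b where ab: "(a,b) \<in> set ps2" "y = f a" unfolding p''_def by auto
    then have "a \<in> set p" "a \<noteq> Suc s" using in2 valps by force+
    then show "y \<in> {1..length z}" using setp lz' s ab(2) unfolding f_def by auto
  qed
  moreover have "set q'' \<subseteq> {1..length ys}"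
    unfolding q''_def using in2 valps setq by force
  moreover have "z ! (p'' ! j - 1) = ys ! (q'' ! j - 1)" if j: "j < length p''" for j
  proof -
    obtain a b where ab: "ps2 ! j = (a,b)" by fastforce
    have "(a,b) \<in> set ps2" using j ab[symmetric] unfolding p''_def by (auto intro: nth_mem)
    then have abs: "(a,b) \<in> set ps" "a \<noteq> Suc s" using in2 by force+
    then have v: "z' ! (a - 1) = ys ! (b - 1)" "a \<in> set p" using valps by auto
    have e: "p''!j = f a" "q''!j = b" using j ab unfolding p''_def q''_def by auto
    have a1: "1 \<le> a" "a \<le> Suc (length z)" using v(2) setp lz' by auto
    have "z' ! (a - 1) = z ! (f a - 1)"
    proof (cases "a > Suc s")
      case True
      have lt: "length (take s z) = s" using s by simp
      have "z' ! (a - 1) = ([v] @ drop s z) ! (a - 1 - s)"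
        unfolding z'_def using True lt by (simp add: nth_append)
      also have "\<dots> = drop s z ! (a - 1 - s - 1)" using True by simp
      also have "\<dots> = z ! (s + (a - 1 - s - 1))" using s by (simp add: nth_drop)
      also have "s + (a - 1 - s - 1) = f a - 1" using True unfolding f_def by simp
      finally show ?thesis .
    next
      case False
      then show ?thesis unfolding z'_def f_def using s a1 abs(2) by (auto simp: nth_append)
    qed
    then show ?thesis using e v by simp
  qed
  moreover have "length p \<le> length p'' + 1"
  proof -
    have "length ps = length ps2 + length (filter (\<lambda>x. \<not> fst x \<noteq> Suc s) ps)"
      unfolding ps2_def by (rule sum_length_filter_compl[symmetric])
    moreover have "length (filter (\<lambda>x. \<not> fst x \<noteq> Suc s) ps) = length (filter (\<lambda>a. a = Suc s) (map fst ps))"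
      by (simp add: filter_map comp_def)
    moreover have "distinct (map fst ps)" using sp mf strict_sorted_iff by metis
    ultimately show ?thesis using length_filter_eq_le1[of "map fst ps" "Suc s"] len
      unfolding p''_def ps_def by simp
  qed
  ultimately show ?thesis
    by (intro exI[of _ "(p'', q'')"]) (auto simp: matching_def Let_def p''_def q''_def)
qed

lemma lcs_ins_le:
  assumes "s \<le> length z"
  shows "lcs_len (take s z @ [v] @ drop s z) ys \<le> lcs_len z ys + 1"
proof -
  obtain pe where pe: "matching (take s z @ [v] @ drop s z) ys pe"
    "length (fst pe) = lcs_len (take s z @ [v] @ drop s z) ys" using lcs_ex by blast
  obtain pe' where "matching z ys pe'" "length (fst pe) \<le> length (fst pe') + 1"
    using del_matching[of s z v ys "fst pe" "snd pe"] pe(1) assms by auto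
  then show ?thesis using lcs_ge[of z ys pe'] pe(2) by linarith
qed

lemma list_all2_sum_less:
  "list_all2 (\<le>) xs ys \<Longrightarrow> xs \<noteq> ys \<Longrightarrow> sum_list xs < sum_list (ys::nat list)"
proof (induction rule: list_all2_induct)
  case Nil then show ?case by simp
next
  case (Cons x xs y ys)
  have "sum_list xs \<le> sum_list ys" using Cons.hyps(2)
    by (induction rule: list_all2_induct) auto
  then show ?case using Cons by (cases "x = y") auto
qed

lemma list_all2_sum_le:
  "list_all2 (\<le>) xs ys \<Longrightarrow> sum_list xs \<le> sum_list (ys::nat list)"
  by (induction rule: list_all2_induct) auto

lemma Mmin_ne: "\<exists>pe. pe \<in> Mmin zs ys"
proof -
  define \<mu> where "\<mu> pe = sum_list (fst pe) + sum_list (snd pe)" for pe :: "nat list \<times> nat list"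
  obtain pe0 where "matching zs ys pe0 \<and> length (fst pe0) = lcs_len zs ys" using lcs_ex by blast
  then have "pe0 \<in> M2 zs ys" by (simp add: M2_def)
  then obtain pe where pe: "pe \<in> M2 zs ys" and mn: "\<And>b. b \<in> M2 zs ys \<Longrightarrow> \<mu> pe \<le> \<mu> b"
    using ex_has_least_nat[of "\<lambda>pe. pe \<in> M2 zs ys" pe0 \<mu>] by blast
  have "\<not> (\<exists>b\<in>M2 zs ys. pair_le b pe \<and> b \<noteq> pe)"
  proof
    assume "\<exists>b\<in>M2 zs ys. pair_le b pe \<and> b \<noteq> pe"
    then obtain b where b: "b \<in> M2 zs ys" "pair_le b pe" "b \<noteq> pe" by blast
    have "\<mu> b < \<mu> pe"
    proof (cases "fst b = fst pe")
      case True
      then have "snd b \<noteq> snd pe" using b(3) by (metis prod.collapse)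
      then show ?thesis using b(2) True list_all2_sum_less unfolding pair_le_def \<mu>_def
        by fastforce
    next
      case False
      then show ?thesis using b(2) list_all2_sum_less list_all2_sum_le unfolding pair_le_def \<mu>_def
        by (metis add_less_le_mono)
    qed
    then show False using mn[OF b(1)] by simp
  qed
  then show ?thesis using pe unfolding Mmin_def by blast
qed

lemma count_good:
  assumes pe: "pe \<in> M2 z ys" and lz: "length z = k" and ys: "set ys \<subseteq> {0,1}"
  shows "nonempty_matches pe \<le> card {(v,t). v \<in> {0,1} \<and> t \<in> {2..k} \<and>
           lcs_len (take (t-1) z @ [v] @ drop (t-1) z) ys = lcs_len z ys + 1}"
    (is "_ \<le> card ?S")
proof -
  obtain p q where pq: "pe = (p,q)" by fastforce
  have m: "matching z ys (p,q)" and lp: "length p = lcs_len z ys" using pe pq by (auto simp: M2_def)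
  have len: "length p = length q" and sp: "sorted_wrt (<) p" and sq: "sorted_wrt (<) q"
    and setp: "set p \<subseteq> {1..length z}" and setq: "set q \<subseteq> {1..length ys}"
    using m by (auto simp: matching_def Let_def)
  define I where "I = {i. Suc i < length q \<and> q!i + 2 \<le> q!Suc i}"
  define \<phi> where "\<phi> i = (ys!(q!i), Suc (p!i))" for i
  have "inj_on \<phi> I"
  proof
    fix i j assume "i \<in> I" "j \<in> I" "\<phi> i = \<phi> j"
    then have "p!i = p!j" "i < length p" "j < length p" using len by (auto simp: \<phi>_def I_def)
    moreover have "distinct p" using sp strict_sorted_iff by blast
    ultimately show "i = j" using nth_eq_iff_index_eq by blast
  qed
  moreover have "\<phi> ` I \<subseteq> ?S"
  proof
    fix x assume "x \<in> \<phi> ` I"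
    then obtain i where i: "i \<in> I" "x = \<phi> i" by blast
    have i1: "Suc i < length q" "q!i + 2 \<le> q!Suc i" using i by (auto simp: I_def)
    have pi: "p!i \<in> set p" "p!Suc i \<in> set p" using i1 len by auto
    have qi: "q!Suc i \<in> set q" using i1 by auto
    have pii: "p!i < p!Suc i" using sorted_wrt_nth_less[OF sp, of i "Suc i"] i1 len by auto
    have "q!Suc i \<le> length ys" using qi setq by auto
    then have "q!i < length ys" using i1 by linarith
    then have "ys!(q!i) \<in> set ys" by simp
    then have v: "ys!(q!i) \<in> {0,1}" using ys by auto
    have t: "Suc (p!i) \<in> {2..k}" using pi setp pii lz by auto
    have "matching (take (p!i) z @ [ys!(q!i)] @ drop (p!i) z) ys
           (take (Suc i) p @ [Suc (p!i)] @ map Suc (drop (Suc i) p),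
            take (Suc i) q @ [Suc (q!i)] @ drop (Suc i) q)"
      by (rule ins_matching[OF m i1])
    then have "Suc (length p) \<le> lcs_len (take (p!i) z @ [ys!(q!i)] @ drop (p!i) z) ys"
      using lcs_ge i1 len by fastforce
    moreover have "lcs_len (take (p!i) z @ [ys!(q!i)] @ drop (p!i) z) ys \<le> lcs_len z ys + 1"
      using pi setp by (intro lcs_ins_le) auto
    ultimately have "lcs_len (take (p!i) z @ [ys!(q!i)] @ drop (p!i) z) ys = lcs_len z ys + 1"
      using lp by simp
    then show "x \<in> ?S" using i v t by (simp add: \<phi>_def)
  qed
  moreover have "finite ?S"
    by (rule finite_subset[of _ "{0,1} \<times> {2..k}"]) auto
  ultimately have "card I \<le> card ?S" by (intro card_inj_on_le) auto
  then show ?thesis unfolding nonempty_matches_def pq I_def by simp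
qed


theorem lemma12:
  fixes M :: "'a measure"
    and V Y T :: "nat \<Rightarrow> 'a \<Rightarrow> nat"
    and \<gamma> :: real and n k :: nat
  assumes "prob_space M"
    and indep: "prob_space.indep_vars M (\<lambda>_. count_space UNIV) (case_sum V (case_sum Y T))
                 (Inl ` {1..} \<union> Inr ` Inl ` {1..} \<union> Inr ` Inr ` {3..})"
    and distV: "\<And>i. i \<ge> 1 \<Longrightarrow> distr M (count_space UNIV) (V i) = measure_pmf (pmf_of_set {0,1})"
    and distY: "\<And>j. j \<ge> 1 \<Longrightarrow> distr M (count_space UNIV) (Y j) = measure_pmf (pmf_of_set {0,1})"
    and distT: "\<And>m. m \<ge> 2 \<Longrightarrow> distr M (count_space UNIV) (T (Suc m)) = measure_pmf (pmf_of_set {2..m})"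
    and "\<gamma> > 0"
    and "(45/100) * real n \<le> real k" and "k < n" and "2 \<le> k"
  shows "AE x in M.
           (\<forall>pe \<in> Mmin (bitdrop (\<lambda>i. V i x) (\<lambda>i. T i x) k) (map (\<lambda>j. Y j x) [1..<Suc n]).
               real (nonempty_matches pe) > \<gamma> * real n)
           \<longrightarrow> real_cond_exp M
                 (vimage_algebra (space M)
                    (\<lambda>x. (bitdrop (\<lambda>i. V i x) (\<lambda>i. T i x) k, map (\<lambda>j. Y j x) [1..<Suc n]))
                    (count_space UNIV))
                 (indicator {x \<in> space M.
                    int (lcs_len (bitdrop (\<lambda>i. V i x) (\<lambda>i. T i x) (Suc k)) (map (\<lambda>j. Y j x) [1..<Suc n]))
                    - int (lcs_len (bitdrop (\<lambda>i. V i x) (\<lambda>i. T i x) k) (map (\<lambda>j. Y j x) [1..<Suc n])) = 1})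
                 x \<ge> 0.5 * \<gamma>"
proof -
  interpret prob_space M by fact
  have k2: "2 \<le> k" and kn: "k < n" by fact+
  define Xf where "Xf = case_sum V (case_sum Y T)"
  define I where "I = (Inl ` {1..} \<union> Inr ` Inl ` {1..} \<union> Inr ` Inr ` {3..} :: (nat + nat + nat) set)"
  have ind: "indep_vars (\<lambda>_. count_space UNIV) Xf I" using indep unfolding Xf_def I_def .
  have rv: "\<And>i. i \<in> I \<Longrightarrow> Xf i \<in> measurable M (count_space UNIV)" using ind by (auto simp: indep_vars_def)
  have Ym: "Y j \<in> measurable M (count_space UNIV)" if "j \<ge> 1" for j
  proof -
    have "Inr (Inl j) \<in> I" using that unfolding I_def by blast
    from rv[OF this] show ?thesis by (simp add: Xf_def)
  qed
  define K where "K = (Inl ` {1..k} \<union> Inr ` Inl ` {1..n} \<union> Inr ` Inr ` {3..k} :: (nat + nat + nat) set)"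
  define B where "B = ({Inl (Suc k), Inr (Inr (Suc k))} :: (nat + nat + nat) set)"
  have KB1: "K \<inter> B = {}" unfolding K_def B_def by auto
  have KB2: "K \<subseteq> I" unfolding K_def I_def by (intro Un_mono image_mono) auto
  have KB3: "B \<subseteq> I" using k2 unfolding B_def I_def by auto
  note KB = KB1 KB2 KB3
  define FX where "FX g = (bitdrop (\<lambda>i. g (Inl i)) (\<lambda>i. g (Inr (Inr i))) k, map (\<lambda>j. g (Inr (Inl j))) [1..<Suc n])"
    for g :: "nat + nat + nat \<Rightarrow> nat"
  define FW where "FW g = ([g (Inl (Suc k))], [g (Inr (Inr (Suc k)))])" for g :: "nat + nat + nat \<Rightarrow> nat"
  define X where "X x = (bitdrop (\<lambda>i. V i x) (\<lambda>i. T i x) k, map (\<lambda>j. Y j x) [1..<Suc n])" for x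
  define W where "W x = ([V (Suc k) x], [T (Suc k) x])" for x
  have FXm: "FX \<in> measurable (PiM K (\<lambda>_. count_space UNIV)) (count_space UNIV)"
  proof (rule measurable_dep[of K])
    show "finite K" unfolding K_def by auto
    fix g g' :: "nat + nat + nat \<Rightarrow> nat" assume e: "\<And>i. i \<in> K \<Longrightarrow> g i = g' i"
    have "bitdrop (\<lambda>i. g (Inl i)) (\<lambda>i. g (Inr (Inr i))) k = bitdrop (\<lambda>i. g' (Inl i)) (\<lambda>i. g' (Inr (Inr i))) k"
      by (rule bitdrop_cong) (auto intro!: e simp: K_def)
    moreover have "map (\<lambda>j. g (Inr (Inl j))) [1..<Suc n] = map (\<lambda>j. g' (Inr (Inl j))) [1..<Suc n]"
      by (auto intro!: e simp: K_def)
    ultimately show "FX g = FX g'" unfolding FX_def by simp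
  qed simp
  have FWm: "FW \<in> measurable (PiM B (\<lambda>_. count_space UNIV)) (count_space UNIV)"
  proof (rule measurable_dep[of B])
    fix g g' :: "nat + nat + nat \<Rightarrow> nat" assume e: "\<And>i. i \<in> B \<Longrightarrow> g i = g' i"
    then show "FW g = FW g'" unfolding FW_def B_def by simp
  qed (auto simp: B_def)
  have "indep_var (count_space UNIV) (FX \<circ> (\<lambda>\<omega>. restrict (\<lambda>i. Xf i \<omega>) K))
                   (count_space UNIV) (FW \<circ> (\<lambda>\<omega>. restrict (\<lambda>i. Xf i \<omega>) B))"
    by (rule indep_var_compose[OF indep_var_restrict[OF ind KB] FXm FWm])
  moreover have "FX \<circ> (\<lambda>\<omega>. restrict (\<lambda>i. Xf i \<omega>) K) = X"
  proof
    fix \<omega>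
    have "bitdrop (\<lambda>i. restrict (\<lambda>i. Xf i \<omega>) K (Inl i)) (\<lambda>i. restrict (\<lambda>i. Xf i \<omega>) K (Inr (Inr i))) k
          = bitdrop (\<lambda>i. V i \<omega>) (\<lambda>i. T i \<omega>) k"
      by (rule bitdrop_cong) (auto simp: K_def Xf_def)
    moreover have "map (\<lambda>j. restrict (\<lambda>i. Xf i \<omega>) K (Inr (Inl j))) [1..<Suc n] = map (\<lambda>j. Y j \<omega>) [1..<Suc n]"
      by (auto simp: K_def Xf_def)
    ultimately show "(FX \<circ> (\<lambda>\<omega>. restrict (\<lambda>i. Xf i \<omega>) K)) \<omega> = X \<omega>"
      unfolding FX_def X_def by simp
  qed
  moreover have "FW \<circ> (\<lambda>\<omega>. restrict (\<lambda>i. Xf i \<omega>) B) = W"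
    by (auto simp: FW_def W_def B_def Xf_def)
  ultimately have indXW: "indep_var (count_space UNIV) X (count_space UNIV) W" by simp
  have "indep_var (count_space UNIV) ((\<lambda>g. g (Inl (Suc k))) \<circ> (\<lambda>\<omega>. restrict (\<lambda>i. Xf i \<omega>) {Inl (Suc k)}))
                   (count_space UNIV) ((\<lambda>g. g (Inr (Inr (Suc k)))) \<circ> (\<lambda>\<omega>. restrict (\<lambda>i. Xf i \<omega>) {Inr (Inr (Suc k))}))"
    using KB(3) unfolding B_def
    by (intro indep_var_compose[OF indep_var_restrict[OF ind]] measurable_component_singleton) auto
  moreover have "(\<lambda>g. g (Inl (Suc k))) \<circ> (\<lambda>\<omega>. restrict (\<lambda>i. Xf i \<omega>) {Inl (Suc k)}) = V (Suc k)"
    by (auto simp: Xf_def)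
  moreover have "(\<lambda>g. g (Inr (Inr (Suc k)))) \<circ> (\<lambda>\<omega>. restrict (\<lambda>i. Xf i \<omega>) {Inr (Inr (Suc k))}) = T (Suc k)"
    by (auto simp: Xf_def)
  ultimately have indVT: "indep_var (count_space UNIV) (V (Suc k)) (count_space UNIV) (T (Suc k))" by simp
  have Wm: "W \<in> measurable M (count_space UNIV)" using indep_var_rv2[OF indXW] .
  define P where "P a w \<longleftrightarrow> int (lcs_len (take (hd (snd w) - 1) (fst a) @ [hd (fst w)] @ drop (hd (snd w) - 1) (fst a)) (snd a))
      - int (lcs_len (fst a) (snd a)) = 1" for a w :: "nat list \<times> nat list"
  define G where "G a w = (if P a w then 1 else 0 :: real)" for a w
  define f where "f = (indicator {x \<in> space M.
                    int (lcs_len (bitdrop (\<lambda>i. V i x) (\<lambda>i. T i x) (Suc k)) (map (\<lambda>j. Y j x) [1..<Suc n]))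
                    - int (lcs_len (bitdrop (\<lambda>i. V i x) (\<lambda>i. T i x) k) (map (\<lambda>j. Y j x) [1..<Suc n])) = 1} :: 'a \<Rightarrow> real)"
  have feq: "f x = G (X x) (W x)" if "x \<in> space M" for x
    using that k2 unfolding f_def G_def P_def X_def W_def by (simp add: indicator_def not_less)
  have AE1: "AE x in M. real_cond_exp M (vimage_algebra (space M) X (count_space UNIV)) f x
            = (\<integral>w. G (X x) w \<partial>distr M (count_space UNIV) W)"
    by (rule condexp_indep[where G=G and f=f, OF assms(1) indXW]) (simp_all add: G_def feq)
  have hval: "(\<integral>w. G a w \<partial>distr M (count_space UNIV) W)
      = (\<Sum>v\<in>{0,1}. \<Sum>t\<in>{2..k}. G a ([v],[t])) / (2 * (real k - 1))" for a
  proof -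
    have "(\<integral>w. G a w \<partial>distr M (count_space UNIV) W) = (\<integral>x. G a (W x) \<partial>M)"
      by (rule integral_distr[OF Wm]) simp
    also have "\<dots> = (\<integral>x. (\<lambda>v t. G a ([v],[t])) (V (Suc k) x) (T (Suc k) x) \<partial>M)"
      unfolding W_def by simp
    also have "\<dots> = (\<integral>v. (\<integral>t. G a ([v],[t]) \<partial>distr M (count_space UNIV) (T (Suc k))) \<partial>distr M (count_space UNIV) (V (Suc k)))"
      by (rule expect_indep2[OF assms(1) indVT]) (simp add: G_def)
    also have "\<dots> = (\<integral>v. (\<integral>t. G a ([v],[t]) \<partial>measure_pmf (pmf_of_set {2..k})) \<partial>measure_pmf (pmf_of_set {0,1}))"
      using distV[of "Suc k"] distT[OF k2] by simp
    also have "\<dots> = (\<Sum>v\<in>{0,1}. \<Sum>t\<in>{2..k}. G a ([v],[t])) / (2 * (real k - 1))"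
      using k2 by (simp add: integral_pmf_of_set of_nat_diff field_simps)
    finally show ?thesis .
  qed
  have AE2: "AE x in M. \<forall>j\<in>{1..n}. Y j x \<in> {0,1}"
  proof (rule AE_finite_allI)
    fix j assume "j \<in> {1..n}"
    then have j: "j \<ge> 1" by simp
    have "AE y in distr M (count_space UNIV) (Y j). y \<in> {0,1::nat}"
      unfolding distY[OF j] by (simp add: AE_measure_pmf_iff)
    then show "AE x in M. Y j x \<in> {0,1}" by (rule AE_distrD[OF Ym[OF j]])
  qed simp
  have gam: "\<gamma> > 0" by fact
  have "AE x in M. (\<forall>pe \<in> Mmin (fst (X x)) (snd (X x)). real (nonempty_matches pe) > \<gamma> * real n)
      \<longrightarrow> real_cond_exp M (vimage_algebra (space M) X (count_space UNIV)) f x \<ge> 0.5 * \<gamma>"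
    using AE1 AE2
  proof eventually_elim
    case (elim x)
    define z where "z = fst (X x)"
    define ys where "ys = snd (X x)"
    have Xx: "X x = (z, ys)" unfolding z_def ys_def by simp
    have lz: "length z = k" unfolding z_def X_def by (simp add: length_bitdrop)
    have ys01: "set ys \<subseteq> {0,1}"
    proof
      fix y assume "y \<in> set ys"
      then obtain j where "j \<in> {1..n}" "y = Y j x" unfolding ys_def X_def
        by (force simp: less_Suc_eq_le)
      then show "y \<in> {0,1}" using elim(2) by metis
    qed
    show ?case
    proof
      assume H: "\<forall>pe\<in>Mmin (fst (X x)) (snd (X x)). \<gamma> * real n < real (nonempty_matches pe)"
      obtain pe where pe: "pe \<in> Mmin z ys" using Mmin_ne by blast
      then have pe2: "pe \<in> M2 z ys" by (simp add: Mmin_def)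
      have nm: "\<gamma> * real n < real (nonempty_matches pe)" using H pe unfolding z_def ys_def by blast
      define S where "S = {(v,t). v \<in> {0::nat,1} \<and> t \<in> {2..k} \<and>
           lcs_len (take (t-1) z @ [v] @ drop (t-1) z) ys = lcs_len z ys + 1}"
      have cS: "nonempty_matches pe \<le> card S" using count_good[OF pe2 lz ys01] unfolding S_def .
      have SA: "S \<subseteq> {0,1} \<times> {2..k}" unfolding S_def by auto
      have sumS: "(\<Sum>v\<in>{0,1}. \<Sum>t\<in>{2..k}. G (X x) ([v],[t])) = real (card S)"
      proof -
        have "(\<Sum>v\<in>{0,1}. \<Sum>t\<in>{2..k}. G (X x) ([v],[t])) = (\<Sum>p\<in>{0,1}\<times>{2..k}. G (X x) ([fst p],[snd p]))"
          by (simp add: sum.cartesian_product case_prod_beta')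
        also have "\<dots> = (\<Sum>p\<in>{0,1}\<times>{2..k}. if p \<in> S then 1 else 0)"
          by (rule sum.cong) (auto simp: G_def P_def S_def Xx)
        also have "\<dots> = real (card ({0,1}\<times>{2..k} \<inter> {p. p \<in> S}))"
          by (simp add: sum.If_cases)
        also have "{0,1}\<times>{2..k} \<inter> {p. p \<in> S} = S" using SA by blast
        finally show ?thesis .
      qed
      have kpos: "real k - 1 > 0" using k2 by simp
      have "\<gamma> * (real k - 1) \<le> \<gamma> * real n" using gam kn by (intro mult_left_mono) auto
      moreover have "real (nonempty_matches pe) \<le> real (card S)" using cS by simp
      ultimately have "\<gamma> * (real k - 1) \<le> real (card S)" using nm by linarith
      then have "0.5 * \<gamma> \<le> real (card S) / (2 * (real k - 1))"
        using kpos by (simp add: pos_le_divide_eq algebra_simps)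
      then show "0.5 * \<gamma> \<le> real_cond_exp M (vimage_algebra (space M) X (count_space UNIV)) f x"
        using elim(1) hval sumS by simp
    qed
  qed
  then show ?thesis unfolding f_def X_def by simp
qed

end
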